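(* Let $F(x,\theta,\xi)$ be a model with parameter blocks $\theta=(\theta_0,\dots,\theta_L)$ and $\xi=(\xi_0,\dots,\xi_{L-1})$ such that $F(x,\theta,\xi)\in\{-1,+1\}$ for all $x\in\mathcal{X}$. Suppose there exist $a_0,\dots,a_L,b_0,\dots,b_{L-1}>0$ such that whenever $\|\hat\theta_i-\theta_i\|_2\le a_i$ for all $i$ and $\|\hat\xi_i-\xi_i\|_2\le b_i$ for all $i$, we have $|F(x,\theta,\xi)-F(x,\hat\theta,\hat\xi)|<1$ for all $x\in\mathcal{X}$. Then for all $x\in\mathcal{X}$, $m_F((\theta,\xi),x,\mathbf{1}(F(x,\theta,\xi)\ge0))\ge\min\{a_0,\dots,a_L,b_0,\dots,b_{L-1}\}$. The same lower bound holds for $m_{F'}(\theta',x,\mathbf{1}(F'(x,\theta')\ge0))$ for any layer-based weight-shared model $F'(x,\theta')=F(x,\tau^{(1)}(\theta'),\tau^{(2)}(\theta'))$ with $\tau^{(1)}(\theta')=\theta$, $\tau^{(2)}(\theta')=\xi$.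
   Context: All-layer margin of an architecture $F$ with parameter vector $\vartheta$: $m_F(\vartheta,x,y)=\min\{\|\delta\|_2:(y-0.5)F(x,\vartheta+\delta)\le0\}$ for $y\in\{0,1\}$. Layer-based weight sharing: $\theta'\in\mathbb{R}^{d'}$, and each component map $\tau^{(1)}_i$ (producing $\theta_i$) and $\tau^{(2)}_i$ (producing $\xi_i$) has the form $\theta'\mapsto(\theta'_{\pi_1},\dots,\theta'_{\pi_{b}})$ for distinct indices $\pi_1,\dots,\pi_b\in[d']$ (no coordinate of $\theta'$ is duplicated within one layer). *)

theory Defs
  imports "HOL-Analysis.Analysis"
begin

text \<open>A parameter block (a vector in R^d) is a real list; a family of blocks is a list of
  such lists. Euclidean norms are taken over all entries.\<close>

definition vnorm :: "real list \<Rightarrow> real" where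
  "vnorm v = sqrt (\<Sum>r\<leftarrow>v. r\<^sup>2)"

definition vadd :: "real list \<Rightarrow> real list \<Rightarrow> real list" where
  "vadd u v = map2 (+) u v"

definition vsub :: "real list \<Rightarrow> real list \<Rightarrow> real list" where
  "vsub u v = map2 (-) u v"

definition same_shape :: "real list list \<Rightarrow> real list list \<Rightarrow> bool" where
  "same_shape u v \<longleftrightarrow> length u = length v \<and> (\<forall>i<length u. length (u!i) = length (v!i))"

definition badd :: "real list list \<Rightarrow> real list list \<Rightarrow> real list list" where
  "badd u v = map2 vadd u v"

definition bsqnorm :: "real list list \<Rightarrow> real" where
  "bsqnorm u = (\<Sum>b\<leftarrow>u. \<Sum>r\<leftarrow>b. r\<^sup>2)"

text \<open>All-layer margin of a model F(x,theta,xi) at parameter vector (theta,xi):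
  infimum of the Euclidean norm of the full perturbation (delta_theta, delta_xi)
  flipping the prediction; infimum of the empty set is +infinity.\<close>

definition margin2 ::
  "('x \<Rightarrow> real list list \<Rightarrow> real list list \<Rightarrow> real) \<Rightarrow> real list list \<Rightarrow> real list list
    \<Rightarrow> 'x \<Rightarrow> real \<Rightarrow> ereal" where
  "margin2 F \<theta> \<xi> x y = Inf {ereal (sqrt (bsqnorm d\<theta> + bsqnorm d\<xi>)) | d\<theta> d\<xi>.
      same_shape d\<theta> \<theta> \<and> same_shape d\<xi> \<xi> \<and>
      (y - 1/2) * F x (badd \<theta> d\<theta>) (badd \<xi> d\<xi>) \<le> 0}"

text \<open>Layer-based weight sharing: each layer map is given by a list of distinct indices
  into theta' :: R^{d'}.\<close>

definition share :: "nat list list \<Rightarrow> real list \<Rightarrow> real list list" where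
  "share P \<theta>' = map (\<lambda>\<pi>. map (\<lambda>j. \<theta>' ! j) \<pi>) P"

definition layer_sharing :: "nat \<Rightarrow> nat list list \<Rightarrow> bool" where
  "layer_sharing d' P \<longleftrightarrow> (\<forall>\<pi>\<in>set P. distinct \<pi> \<and> (\<forall>j\<in>set \<pi>. j < d'))"

definition margin_shared ::
  "('x \<Rightarrow> real list list \<Rightarrow> real list list \<Rightarrow> real) \<Rightarrow> nat list list \<Rightarrow> nat list list
    \<Rightarrow> real list \<Rightarrow> 'x \<Rightarrow> real \<Rightarrow> ereal" where
  "margin_shared F P1 P2 \<theta>' x y = Inf {ereal (vnorm d) | d.
      length d = length \<theta>' \<and>
      (y - 1/2) * F x (share P1 (vadd \<theta>' d)) (share P2 (vadd \<theta>' d)) \<le> 0}"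

end

theory Submission
  imports Defs
begin

lemma vsub_vadd: "length u = length v \<Longrightarrow> vsub (vadd u v) u = v"
  unfolding vsub_def vadd_def
  by (induction u v rule: list_induct2) auto

lemma sum_list_sq_nth: "(\<Sum>r\<leftarrow>v. r\<^sup>2) = (\<Sum>j<length v. (v!j)\<^sup>2)"
  by (simp add: sum_list_sum_nth atLeast0LessThan)

lemma block_le: "i < length u \<Longrightarrow> (\<Sum>r\<leftarrow>u!i. (r::real)\<^sup>2) \<le> bsqnorm u"
proof -
  assume i: "i < length u"
  have "bsqnorm u = (\<Sum>k<length u. (\<Sum>r\<leftarrow>u!k. r\<^sup>2))"
    unfolding bsqnorm_def by (simp add: sum_list_sum_nth atLeast0LessThan)
  also have "\<dots> \<ge> (\<Sum>r\<leftarrow>u!i. r\<^sup>2)"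
    by (rule member_le_sum) (use i in \<open>auto intro!: sum_list_nonneg\<close>)
  finally show ?thesis .
qed

lemma bsq_nonneg: "bsqnorm u \<ge> 0"
  unfolding bsqnorm_def by (auto intro!: sum_list_nonneg)

lemma share_block_le:
  assumes "distinct \<pi>" "\<forall>j\<in>set \<pi>. j < length d"
  shows "(\<Sum>r\<leftarrow>map (\<lambda>j. d!j) \<pi>. (r::real)\<^sup>2) \<le> (\<Sum>r\<leftarrow>d. r\<^sup>2)"
proof -
  have "(\<Sum>r\<leftarrow>map (\<lambda>j. d!j) \<pi>. r\<^sup>2) = (\<Sum>j\<in>set \<pi>. (d!j)\<^sup>2)"
    using assms(1) by (simp add: sum_list_distinct_conv_sum_set o_def)
  also have "\<dots> \<le> (\<Sum>j<length d. (d!j)\<^sup>2)"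
    by (rule sum_mono2) (use assms(2) in auto)
  finally show ?thesis by (simp add: sum_list_sq_nth)
qed

theorem mainTheorem12:
  fixes F :: "'x \<Rightarrow> real list list \<Rightarrow> real list list \<Rightarrow> real"
    and X :: "'x set" and L :: nat
    and \<theta> \<xi> :: "real list list" and a b :: "nat \<Rightarrow> real"
  assumes len\<theta>: "length \<theta> = L + 1" and len\<xi>: "length \<xi> = L"
    and sign: "\<forall>x\<in>X. F x \<theta> \<xi> \<in> {-1, 1}"
    and apos: "\<forall>i\<le>L. a i > 0" and bpos: "\<forall>i<L. b i > 0"
    and robust: "\<forall>\<theta>h \<xi>h. same_shape \<theta>h \<theta> \<and> same_shape \<xi>h \<xi>
        \<and> (\<forall>i\<le>L. vnorm (vsub (\<theta>h!i) (\<theta>!i)) \<le> a i)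
        \<and> (\<forall>i<L. vnorm (vsub (\<xi>h!i) (\<xi>!i)) \<le> b i)
        \<longrightarrow> (\<forall>x\<in>X. \<bar>F x \<theta> \<xi> - F x \<theta>h \<xi>h\<bar> < 1)"
  shows "(\<forall>x\<in>X. ereal (Min (a ` {..L} \<union> b ` {..<L}))
            \<le> margin2 F \<theta> \<xi> x (of_bool (F x \<theta> \<xi> \<ge> 0)))
     \<and> (\<forall>d' P1 P2 \<theta>'. length \<theta>' = d' \<and> layer_sharing d' P1 \<and> layer_sharing d' P2
          \<and> share P1 \<theta>' = \<theta> \<and> share P2 \<theta>' = \<xi> \<longrightarrow>
          (\<forall>x\<in>X. ereal (Min (a ` {..L} \<union> b ` {..<L}))
            \<le> margin_shared F P1 P2 \<theta>' x (of_bool (F x (share P1 \<theta>') (share P2 \<theta>') \<ge> 0))))"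
proof -
  define m where "m = Min (a ` {..L} \<union> b ` {..<L})"
  have ma: "\<And>i. i \<le> L \<Longrightarrow> m \<le> a i" unfolding m_def by (intro Min_le) auto
  have mb: "\<And>i. i < L \<Longrightarrow> m \<le> b i" unfolding m_def by (intro Min_le) auto
  have key: "m \<le> r" if x: "x \<in> X" and sh: "same_shape \<theta>h \<theta>" "same_shape \<xi>h \<xi>"
    and ba: "\<forall>i\<le>L. vnorm (vsub (\<theta>h!i) (\<theta>!i)) \<le> r"
    and bb: "\<forall>i<L. vnorm (vsub (\<xi>h!i) (\<xi>!i)) \<le> r"
    and flip: "(of_bool (F x \<theta> \<xi> \<ge> 0) - 1/2) * F x \<theta>h \<xi>h \<le> 0"
    for x \<theta>h \<xi>h r
  proof (rule ccontr)
    assume "\<not> m \<le> r"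
    hence "\<bar>F x \<theta> \<xi> - F x \<theta>h \<xi>h\<bar> < 1"
    proof -
      have r: "r < m" using \<open>\<not> m \<le> r\<close> by simp
      have "\<forall>i\<le>L. vnorm (vsub (\<theta>h!i) (\<theta>!i)) \<le> a i"
        using ba ma r by (meson less_imp_le order_trans le_less_trans)
      moreover have "\<forall>i<L. vnorm (vsub (\<xi>h!i) (\<xi>!i)) \<le> b i"
        using bb mb r by (meson less_imp_le order_trans le_less_trans)
      ultimately show ?thesis using robust sh x by blast
    qed
    moreover have "F x \<theta> \<xi> \<in> {-1,1}" using sign x by blast
    ultimately show False using flip by (auto simp: mult_le_0_iff)
  qed
  show ?thesis
  proof (intro conjI ballI allI impI)
    fix x assume x: "x \<in> X"
    show "ereal (Min (a ` {..L} \<union> b ` {..<L})) \<le> margin2 F \<theta> \<xi> x (of_bool (F x \<theta> \<xi> \<ge> 0))"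
      unfolding margin2_def m_def[symmetric]
    proof (rule Inf_greatest, clarify)
      fix d\<theta> d\<xi>
      assume s1: "same_shape d\<theta> \<theta>" and s2: "same_shape d\<xi> \<xi>"
        and fl: "(of_bool (F x \<theta> \<xi> \<ge> 0) - 1/2) * F x (badd \<theta> d\<theta>) (badd \<xi> d\<xi>) \<le> 0"
      define r where "r = sqrt (bsqnorm d\<theta> + bsqnorm d\<xi>)"
      have "m \<le> r"
      proof (rule key[OF x _ _ _ _ fl])
        show "same_shape (badd \<theta> d\<theta>) \<theta>" "same_shape (badd \<xi> d\<xi>) \<xi>"
          using s1 s2 by (auto simp: same_shape_def badd_def vadd_def)
        show "\<forall>i\<le>L. vnorm (vsub (badd \<theta> d\<theta> ! i) (\<theta> ! i)) \<le> r"
        proof (intro allI impI)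
          fix i assume "i \<le> L"
          hence i: "i < length d\<theta>" "i < length \<theta>" using s1 len\<theta> by (auto simp: same_shape_def)
          have "vsub (badd \<theta> d\<theta> ! i) (\<theta> ! i) = d\<theta>!i"
            using i s1 by (auto simp: badd_def same_shape_def intro!: vsub_vadd)
          moreover have "(\<Sum>r\<leftarrow>d\<theta>!i. r\<^sup>2) \<le> bsqnorm d\<theta> + bsqnorm d\<xi>"
            using block_le[OF i(1)] bsq_nonneg[of d\<xi>] by linarith
          ultimately show "vnorm (vsub (badd \<theta> d\<theta> ! i) (\<theta> ! i)) \<le> r"
            unfolding r_def vnorm_def by (simp add: real_sqrt_le_mono)
        qed
        show "\<forall>i<L. vnorm (vsub (badd \<xi> d\<xi> ! i) (\<xi> ! i)) \<le> r"
        proof (intro allI impI)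
          fix i assume "i < L"
          hence i: "i < length d\<xi>" "i < length \<xi>" using s2 len\<xi> by (auto simp: same_shape_def)
          have "vsub (badd \<xi> d\<xi> ! i) (\<xi> ! i) = d\<xi>!i"
            using i s2 by (auto simp: badd_def same_shape_def intro!: vsub_vadd)
          moreover have "(\<Sum>r\<leftarrow>d\<xi>!i. r\<^sup>2) \<le> bsqnorm d\<theta> + bsqnorm d\<xi>"
            using block_le[OF i(1)] bsq_nonneg[of d\<theta>] by linarith
          ultimately show "vnorm (vsub (badd \<xi> d\<xi> ! i) (\<xi> ! i)) \<le> r"
            unfolding r_def vnorm_def by (simp add: real_sqrt_le_mono)
        qed
      qed
      thus "ereal m \<le> ereal (sqrt (bsqnorm d\<theta> + bsqnorm d\<xi>))" by (simp add: r_def)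
    qed
  next
    fix d' P1 P2 \<theta>' x
    assume H: "length \<theta>' = d' \<and> layer_sharing d' P1 \<and> layer_sharing d' P2
          \<and> share P1 \<theta>' = \<theta> \<and> share P2 \<theta>' = \<xi>" and x: "x \<in> X"
    hence l1: "layer_sharing (length \<theta>') P1" and l2: "layer_sharing (length \<theta>') P2"
      and e1: "share P1 \<theta>' = \<theta>" and e2: "share P2 \<theta>' = \<xi>" by auto
    have gen: "vnorm (vsub (share P (vadd \<theta>' d) ! i) (share P \<theta>' ! i)) \<le> vnorm d"
      if "layer_sharing (length \<theta>') P" "i < length P" "length d = length \<theta>'" for P i d
    proof -
      have pi: "distinct (P!i)" "\<forall>j\<in>set (P!i). j < length d"
        using that nth_mem[OF that(2)] unfolding layer_sharing_def by auto
      have "vsub (share P (vadd \<theta>' d) ! i) (share P \<theta>' ! i) = map (\<lambda>j. d!j) (P!i)"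
        using that(2,3) pi(2) by (auto simp: share_def vsub_def vadd_def map2_map_map
             intro!: nth_equalityI)
      thus ?thesis unfolding vnorm_def
        using share_block_le[OF pi] by (simp add: real_sqrt_le_mono)
    qed
    show "ereal (Min (a ` {..L} \<union> b ` {..<L}))
            \<le> margin_shared F P1 P2 \<theta>' x (of_bool (F x (share P1 \<theta>') (share P2 \<theta>') \<ge> 0))"
      unfolding margin_shared_def m_def[symmetric] e1 e2
    proof (rule Inf_greatest, clarify)
      fix d assume ld: "length d = length \<theta>'"
        and fl: "(of_bool (F x \<theta> \<xi> \<ge> 0) - 1/2) * F x (share P1 (vadd \<theta>' d)) (share P2 (vadd \<theta>' d)) \<le> 0"
      have lp1: "length P1 = L + 1" using e1 len\<theta> by (auto simp: share_def)
      have lp2: "length P2 = L" using e2 len\<xi> by (auto simp: share_def)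
      have "m \<le> vnorm d"
      proof (rule key[OF x _ _ _ _ fl])
        show "same_shape (share P1 (vadd \<theta>' d)) \<theta>" "same_shape (share P2 (vadd \<theta>' d)) \<xi>"
          unfolding e1[symmetric] e2[symmetric] by (auto simp: same_shape_def share_def)
        show "\<forall>i\<le>L. vnorm (vsub (share P1 (vadd \<theta>' d) ! i) (\<theta> ! i)) \<le> vnorm d"
          using gen[OF l1 _ ld] lp1 e1 by auto
        show "\<forall>i<L. vnorm (vsub (share P2 (vadd \<theta>' d) ! i) (\<xi> ! i)) \<le> vnorm d"
          using gen[OF l2 _ ld] lp2 e2 by auto
      qed
      thus "ereal m \<le> ereal (vnorm d)" by simp
    qed
  qed
qed

end
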